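(* Fix integers $T_0,K\ge1$ and $\delta\in(0,1)$, and let $\mathcal B^B$ be the adaptive buyer grid built from $T_0$ i.i.d. samples as described in the context. Then, with probability at least $1-\delta$ over the samples, $$\max_{q\in[0,1]}\mathrm{GFT}(q)-\max_{q\in\mathcal B^B}\mathrm{GFT}(q)\le \frac1K+\sqrt{\frac{\ln(2/\delta)}{2T_0}}.$$
   Context: There are $n\ge2$ buyers and one seller; valuations $(\mathbf b,s)\in[0,1]^{n+1}$ are drawn from a probability distribution $\mathcal P$ on $[0,1]^{n+1}$. Let $\bar b$ be the largest and $\underline b$ the second largest entry of $\mathbf b$ (with multiplicity). For $q\in[0,1]$, $\mathrm{GFT}(q):=\mathbb E_{(\mathbf b,s)\sim\mathcal P}[(\bar b-s)\mathbb I(s\le\max\{q,\underline b\})\mathbb I(\bar b\ge q)]$, and the maximum over $[0,1]$ is assumed to be attained. Adaptive buyer grid: draw $T_0$ i.i.d. samples $(\mathbf b_t,s_t)\sim\mathcal P$ and let $\mathcal B$ be the multiset $\{\bar b_1,\dots,\bar b_{T_0}\}$. Set $p_0:=0$. For $k=0,1,\dots,K-1$, let $p_{k+1}$ be the largest $q\in\mathcal B$ such that $|\{b\in\mathcal B: p_k<b<q\}|\le T_0/K$ (counting multiplicity), and $p_{k+1}:=1$ if no such $q$ exists. The grid is $\mathcal B^B:=\{0,p_1,\dots,p_K\}$. *)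

theory Defs
  imports "HOL-Probability.Probability"
begin

text \<open>Buyer valuations are vectors b :: real^'n (n = CARD('n) buyers), the seller value is s :: real.\<close>

definition top_val :: "real^'n \<Rightarrow> real" where
  "top_val b = Max (range (\<lambda>i. b $ i))"

text \<open>Second largest entry, counted with multiplicity: sort all entries ascending and take
  the second-to-last one.\<close>
definition second_val :: "real^'n \<Rightarrow> real" where
  "second_val b = (let xs = sorted_list_of_multiset (image_mset (\<lambda>i. b $ i) (mset_set UNIV))
                   in xs ! (length xs - 2))"

definition GFT :: "((real^'n) \<times> real) measure \<Rightarrow> real \<Rightarrow> real" where
  "GFT P q = (\<integral>x. (if snd x \<le> max q (second_val (fst x)) \<and> q \<le> top_val (fst x)
                     then top_val (fst x) - snd x else 0) \<partial>P)"

definition grid_step :: "real multiset \<Rightarrow> nat \<Rightarrow> nat \<Rightarrow> real \<Rightarrow> real" where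
  "grid_step B T0 K p =
     (let C = {q \<in> set_mset B. real (size (filter_mset (\<lambda>b. p < b \<and> b < q) B)) \<le> real T0 / real K}
      in if C = {} then 1 else Max C)"

fun grid_pt :: "real multiset \<Rightarrow> nat \<Rightarrow> nat \<Rightarrow> nat \<Rightarrow> real" where
  "grid_pt B T0 K 0 = 0"
| "grid_pt B T0 K (Suc k) = grid_step B T0 K (grid_pt B T0 K k)"

definition buyer_grid :: "real multiset \<Rightarrow> nat \<Rightarrow> nat \<Rightarrow> real set" where
  "buyer_grid B T0 K = {0} \<union> {grid_pt B T0 K k | k. 1 \<le> k \<and> k \<le> K}"

definition sample_tops :: "(nat \<Rightarrow> (real^'n) \<times> real) \<Rightarrow> nat \<Rightarrow> real multiset" where
  "sample_tops \<omega> T0 = image_mset (\<lambda>t. top_val (fst (\<omega> t))) (mset_set {..<T0})"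

end

theory Submission
  imports Defs
begin



lemma top_val_le_iff: "top_val (b::real^'n) \<le> a \<longleftrightarrow> (\<forall>i. b $ i \<le> a)"
  unfolding top_val_def by (subst Max_le_iff) auto

lemma top_val_in: "\<exists>i. top_val (b::real^'n) = b $ i"
proof -
  have "top_val b \<in> range (\<lambda>i. b $ i)" unfolding top_val_def by (rule Max_in) auto
  thus ?thesis by auto
qed

lemma top_val_ge: "b $ i \<le> top_val (b::real^'n)"
  unfolding top_val_def by (rule Max_ge) auto


lemma l1: "length (sorted_list_of_multiset (image_mset (\<lambda>i. (b::real^'n) $ i) (mset_set (UNIV::'n set)))) = CARD('n)"
  by (metis size_image_mset size_mset size_mset_set mset_sorted_list_of_multiset)
lemma l2: "card {i. a < (b::real^'n) $ i} = size (filter_mset (\<lambda>x. a < x) (image_mset (\<lambda>i. (b::real^'n) $ i) (mset_set (UNIV::'n set))))"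
  by (simp add: filter_mset_image_mset)
lemma l3: "size (filter_mset P M) = length (filter P (sorted_list_of_multiset M))"
  by (metis mset_filter size_mset mset_sorted_list_of_multiset)

lemma second_val_le_iff:
  assumes "CARD('n) \<ge> 2"
  shows "second_val (b::real^'n) \<le> a \<longleftrightarrow> card {i. a < b $ i} \<le> 1"
proof -
  define M where "M = image_mset (\<lambda>i. b $ i) (mset_set (UNIV::'n set))"
  define xs where "xs = sorted_list_of_multiset M"
  have len: "length xs = CARD('n)"
    unfolding xs_def M_def by (rule l1)
  have sorted: "sorted xs" unfolding xs_def by simp
  have sv: "second_val b = xs ! (length xs - 2)" unfolding second_val_def xs_def M_def Let_def ..
  have c: "card {i. a < b $ i} = card {k. k < length xs \<and> a < xs ! k}"
    unfolding M_def xs_def l2 l3 by (rule length_filter_conv_card)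
  show ?thesis
  proof
    assume le: "second_val b \<le> a"
    have "{k. k < length xs \<and> a < xs ! k} \<subseteq> {length xs - 1}"
    proof
      fix k assume k: "k \<in> {k. k < length xs \<and> a < xs ! k}"
      show "k \<in> {length xs - 1}"
      proof (rule ccontr)
        assume "k \<notin> {length xs - 1}"
        then have "k \<le> length xs - 2" using k by auto
        then have "xs ! k \<le> xs ! (length xs - 2)" using sorted len assms by (intro sorted_nth_mono) auto
        then show False using k le sv by auto
      qed
    qed
    then have "card {k. k < length xs \<and> a < xs ! k} \<le> card {length xs - 1}"
      by (intro card_mono) auto
    then show "card {i. a < b $ i} \<le> 1" using c by simp
  next
    assume le: "card {i. a < b $ i} \<le> 1"
    show "second_val b \<le> a"
    proof (rule ccontr)
      assume "\<not> second_val b \<le> a"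
      then have g: "a < xs ! (length xs - 2)" using sv by simp
      have "xs ! (length xs - 2) \<le> xs ! (length xs - 1)" using sorted len assms by (intro sorted_nth_mono) auto
      then have "{length xs - 2, length xs - 1} \<subseteq> {k. k < length xs \<and> a < xs ! k}" using g len assms by auto
      then have "card {length xs - 2, length xs - 1} \<le> card {k. k < length xs \<and> a < xs ! k}"
        by (intro card_mono) auto
      moreover have "card {length xs - 2, length xs - 1} = 2" using len assms by auto
      ultimately show False using le c by simp
    qed
  qed
qed
lemma second_val_le_top: "CARD('n) \<ge> 2 \<Longrightarrow> second_val (b::real^'n) \<le> top_val b"
proof -
  assume a: "CARD('n) \<ge> 2"
  have "{i. top_val b < b $ i} = {}" using top_val_ge[of b] by (auto simp: not_less)
  then show ?thesis by (subst second_val_le_iff[OF a]) simp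
qed

lemma second_val_le_iff2:
  assumes "CARD('n) \<ge> 2"
  shows "second_val (w::real^'n) \<le> a \<longleftrightarrow> (\<forall>i j. j \<noteq> i \<longrightarrow> w $ i \<le> a \<or> w $ j \<le> a)"
proof (subst second_val_le_iff[OF assms], intro iffI allI impI)
    fix i j :: 'n assume c: "card {i. a < w $ i} \<le> 1" and "j \<noteq> i"
    show "w $ i \<le> a \<or> w $ j \<le> a"
    proof (rule ccontr)
      assume "\<not> (w $ i \<le> a \<or> w $ j \<le> a)"
    then have "{i,j} \<subseteq> {i. a < w $ i}" by auto
    then have "card {i,j} \<le> card {i. a < w $ i}" by (intro card_mono) auto
    then show False using c \<open>j \<noteq> i\<close> by simp
   qed
  next
    assume h: "\<forall>i j. j \<noteq> i \<longrightarrow> w $ i \<le> a \<or> w $ j \<le> a"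
    show "card {i. a < w $ i} \<le> 1"
    proof (cases "{i. a < w $ i} = {}")
      case False
      then obtain i where "a < w $ i" by auto
      then have "{i. a < w $ i} \<subseteq> {i}" using h by (metis (mono_tags, lifting) mem_Collect_eq not_less singleton_iff subsetI)
      then have "card {i. a < w $ i} \<le> card {i}" by (intro card_mono) auto
      then show ?thesis by simp
    qed simp
qed

lemma top_val_measurable[measurable]: "top_val \<in> borel_measurable (borel :: (real^'n) measure)"
proof (subst borel_measurable_iff_le, intro allI)
  fix a
  have "{w \<in> space borel. top_val (w::real^'n) \<le> a} = (\<Inter>i. {w. w $ i \<le> a})"
    by (auto simp: top_val_le_iff)
  also have "\<dots> \<in> sets borel"
    by (intro sets.finite_INT) (auto intro!: closed_Collect_le continuous_intros borel_closed)
  finally show "{w \<in> space borel. top_val (w::real^'n) \<le> a} \<in> sets borel" .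
qed

lemma second_val_measurable:
  assumes "CARD('n) \<ge> 2"
  shows "second_val \<in> borel_measurable (borel :: (real^'n) measure)"
proof (subst borel_measurable_iff_le, intro allI)
  fix a
  have "{w \<in> space borel. second_val (w::real^'n) \<le> a} = (\<Inter>i. \<Inter>j\<in>-{i}. {w. w $ i \<le> a \<or> w $ j \<le> a})"
    unfolding second_val_le_iff2[OF assms] by auto
  also have "\<dots> \<in> sets borel"
    by (intro borel_closed closed_INT ballI closed_Collect_disj closed_Collect_le continuous_intros)
  finally show "{w \<in> space borel. second_val (w::real^'n) \<le> a} \<in> sets borel" .
qed


definition gftf :: "real \<Rightarrow> (real^'n) \<times> real \<Rightarrow> real" where
  "gftf q x = (if snd x \<le> max q (second_val (fst x)) \<and> q \<le> top_val (fst x)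
                     then top_val (fst x) - snd x else 0)"

lemma GFT_gftf: "GFT P q = integral\<^sup>L P (gftf q)"
  unfolding GFT_def gftf_def ..

locale setting =
  fixes P :: "((real^'n) \<times> real) measure"
  assumes n2: "CARD('n) \<ge> 2"
    and prob: "prob_space P"
    and sets_P: "sets P = sets borel"
    and supp: "AE x in P. (\<forall>i. fst x $ i \<in> {0..1}) \<and> snd x \<in> {0..1}"
begin

interpretation prob_space P by (rule prob)

lemma space_P: "space P = UNIV"
  using sets_eq_imp_space_eq[OF sets_P] by simp

lemma meas_top[measurable]: "(\<lambda>x. top_val (fst x)) \<in> borel_measurable P"
proof -
  have "fst \<in> borel_measurable (borel :: ((real^'n) \<times> real) measure)"
    by (intro borel_measurable_continuous_onI continuous_intros)
  then have "(\<lambda>x. top_val (fst x)) \<in> borel_measurable (borel :: ((real^'n) \<times> real) measure)"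
    using top_val_measurable by (rule measurable_compose)
  then show ?thesis by (subst measurable_cong_sets[OF sets_P refl]) simp
qed

lemma meas_second[measurable]: "(\<lambda>x. second_val (fst x)) \<in> borel_measurable P"
proof -
  have "fst \<in> borel_measurable (borel :: ((real^'n) \<times> real) measure)"
    by (intro borel_measurable_continuous_onI continuous_intros)
  then have "(\<lambda>x. second_val (fst x)) \<in> borel_measurable (borel :: ((real^'n) \<times> real) measure)"
    using second_val_measurable[OF n2] by (rule measurable_compose)
  then show ?thesis by (subst measurable_cong_sets[OF sets_P refl]) simp
qed

lemma meas_snd[measurable]: "(\<lambda>x. snd x) \<in> borel_measurable P"
proof -
  have "snd \<in> borel_measurable (borel :: ((real^'n) \<times> real) measure)"
    by (intro borel_measurable_continuous_onI continuous_intros)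
  then show ?thesis by (subst measurable_cong_sets[OF sets_P refl]) simp
qed

lemma meas_gftf[measurable]: "gftf q \<in> borel_measurable P"
  unfolding gftf_def by measurable

lemma AE_bounds: "AE x in P. top_val (fst x) \<in> {0..1} \<and> snd x \<in> {0..1}"
  using supp
proof (rule eventually_mono)
  fix x :: "(real^'n) \<times> real" assume h: "(\<forall>i. fst x $ i \<in> {0..1}) \<and> snd x \<in> {0..1}"
  obtain i where "top_val (fst x) = fst x $ i" using top_val_in by blast
  then show "top_val (fst x) \<in> {0..1} \<and> snd x \<in> {0..1}" using h by metis
qed

lemma integrable_gftf: "integrable P (gftf q)"
proof (rule integrable_const_bound[where B=1])
  show "AE x in P. norm (gftf q x) \<le> 1"
    using AE_bounds by (rule eventually_mono) (auto simp: gftf_def)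
qed simp

lemma sets_R[measurable]: "{x. q \<le> top_val (fst x) \<and> top_val (fst x) < c} \<in> sets P"
proof -
  have "{x\<in>space P. q \<le> top_val (fst x) \<and> top_val (fst x) < c} \<in> sets P" by measurable
  then show ?thesis by (simp add: space_P)
qed

lemma diff_bound_gen:
  assumes "AE x in P. gftf q x - gftf p x \<le> indicator {x. q \<le> top_val (fst x) \<and> top_val (fst x) < c} x"
  shows "GFT P q - GFT P p \<le> measure P {x. q \<le> top_val (fst x) \<and> top_val (fst x) < c}"
proof -
  have "GFT P q - GFT P p = integral\<^sup>L P (\<lambda>x. gftf q x - gftf p x)"
    unfolding GFT_gftf by (rule Bochner_Integration.integral_diff[symmetric]) (auto intro: integrable_gftf)
  also have "\<dots> \<le> integral\<^sup>L P (indicator {x. q \<le> top_val (fst x) \<and> top_val (fst x) < c})"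
    by (rule integral_mono_AE) (auto intro!: integrable_gftf assms integrable_real_indicator simp: less_top[symmetric])
  also have "\<dots> = measure P {x. q \<le> top_val (fst x) \<and> top_val (fst x) < c}"
    by (simp add: space_P)
  finally show ?thesis .
qed

lemma diff_bound_up:
  assumes "q \<le> p"
  shows "GFT P q - GFT P p \<le> measure P {x. q \<le> top_val (fst x) \<and> top_val (fst x) < p}"
proof (rule diff_bound_gen)
  show "AE x in P. gftf q x - gftf p x \<le> indicator {x. q \<le> top_val (fst x) \<and> top_val (fst x) < p} x"
    using AE_bounds
  proof (rule eventually_mono)
    fix x :: "(real^'n) \<times> real" assume h: "top_val (fst x) \<in> {0..1} \<and> snd x \<in> {0..1}"
    show "gftf q x - gftf p x \<le> indicator {x. q \<le> top_val (fst x) \<and> top_val (fst x) < p} x"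
      using h assms by (auto simp: gftf_def indicator_def)
  qed
qed

lemma diff_bound_down:
  assumes "p \<le> q"
  shows "GFT P q - GFT P p \<le> measure P {x. q \<le> top_val (fst x) \<and> top_val (fst x) < 2}"
proof (rule diff_bound_gen)
  show "AE x in P. gftf q x - gftf p x \<le> indicator {x. q \<le> top_val (fst x) \<and> top_val (fst x) < 2} x"
    using AE_bounds
  proof (rule eventually_mono)
    fix x :: "(real^'n) \<times> real" assume h: "top_val (fst x) \<in> {0..1} \<and> snd x \<in> {0..1}"
    have "second_val (fst x) \<le> top_val (fst x)" by (rule second_val_le_top[OF n2])
    then show "gftf q x - gftf p x \<le> indicator {x. q \<le> top_val (fst x) \<and> top_val (fst x) < 2} x"
      using h assms by (auto simp: gftf_def indicator_def)
  qed
qed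

end


lemma lim_le_iff: "(\<forall>n::nat. y < cs + 1 / (1 + real n)) \<longleftrightarrow> y \<le> (cs::real)"
proof
  assume h: "\<forall>n::nat. y < cs + 1 / (1 + real n)"
  show "y \<le> cs"
  proof (rule ccontr)
    assume "\<not> y \<le> cs"
    then have pos: "0 < y - cs" by simp
    obtain n :: nat where n: "1 / (y - cs) < n" using reals_Archimedean2 by blast
    have "1 < real n * (y - cs)" using n pos by (simp add: field_simps)
    also have "\<dots> \<le> real (Suc n) * (y - cs)" using pos by (intro mult_right_mono) auto
    finally have "1 / (1 + real n) < y - cs" by (simp add: field_simps)
    then show False using h[rule_format, of n] by simp
  qed
next
  assume le: "y \<le> cs"
  show "\<forall>n::nat. y < cs + 1 / (1 + real n)"
  proof
    fix n :: nat
    have "0 < 1 / (1 + real n)" by simp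
    then show "y < cs + 1 / (1 + real n)" using le by linarith
  qed
qed

lemma lim_less_iff: "(\<exists>n::nat. y < c - 1 / (1 + real n)) \<longleftrightarrow> y < (c::real)"
proof
  assume "\<exists>n::nat. y < c - 1 / (1 + real n)"
  then obtain n :: nat where "y < c - 1 / (1 + real n)" by blast
  moreover have "0 < 1 / (1 + real n)" by simp
  ultimately show "y < c" by linarith
next
  assume h: "y < c"
  then have pos: "0 < c - y" by simp
  obtain n :: nat where n: "1 / (c - y) < n" using reals_Archimedean2 by blast
  have "1 < real n * (c - y)" using n pos by (simp add: field_simps)
  also have "\<dots> \<le> real (Suc n) * (c - y)" using pos by (intro mult_right_mono) auto
  finally have "1 / (1 + real n) < c - y" by (simp add: field_simps)
  then have "y < c - 1 / (1 + real n)" by linarith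
  then show "\<exists>n::nat. y < c - 1 / (1 + real n)" by blast
qed

context setting
begin

interpretation prob_space P by (rule prob)

definition F :: "real \<Rightarrow> real \<Rightarrow> real" where
  "F q0 c = measure P {x. q0 \<le> top_val (fst x) \<and> top_val (fst x) < c}"

lemma F_mono: "c \<le> c' \<Longrightarrow> F q0 c \<le> F q0 c'"
  unfolding F_def by (rule finite_measure_mono) (auto intro: sets_R)

lemma F_low: "c \<le> q0 \<Longrightarrow> F q0 c = 0"
proof -
  assume "c \<le> q0"
  then have e: "{x. q0 \<le> top_val (fst x) \<and> top_val (fst x) < c} = {}" by auto
  show ?thesis unfolding F_def by (subst e) simp
qed

lemma F_left:
  assumes "F q0 c > t"
  shows "\<exists>c'<c. F q0 c' > t"
proof -
  define A where "A n = {x :: (real^'n) \<times> real. q0 \<le> top_val (fst x) \<and> top_val (fst x) < c - 1 / Suc n}" for n :: nat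
  have "range A \<subseteq> sets P" unfolding A_def using sets_R by auto
  moreover have "incseq A"
  proof (rule incseq_SucI)
    fix n :: nat
    have "1 / real (Suc (Suc n)) \<le> 1 / real (Suc n)" by (intro divide_left_mono) auto
    then show "A n \<subseteq> A (Suc n)" unfolding A_def by auto
  qed
  moreover have "emeasure P (\<Union>i. A i) \<noteq> \<infinity>" by simp
  ultimately have lim: "(\<lambda>i. measure P (A i)) \<longlonglongrightarrow> measure P (\<Union>i. A i)" by (rule Lim_measure_incseq)
  have U: "(\<Union>i. A i) = {x. q0 \<le> top_val (fst x) \<and> top_val (fst x) < c}"
  proof (rule set_eqI)
    fix x :: "(real^'n) \<times> real"
    show "x \<in> (\<Union>i. A i) \<longleftrightarrow> x \<in> {x. q0 \<le> top_val (fst x) \<and> top_val (fst x) < c}"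
      using lim_less_iff[of "top_val (fst x)" c] by (auto simp: A_def)
  qed
  have "(\<lambda>i. measure P (A i)) \<longlonglongrightarrow> F q0 c" using lim unfolding U F_def .
  then have "eventually (\<lambda>i. measure P (A i) > t) sequentially" using assms by (rule order_tendstoD)
  then obtain n where "measure P (A n) > t" by (metis eventually_sequentially order_refl)
  then show ?thesis unfolding F_def A_def by (intro exI[of _ "c - 1 / Suc n"]) auto
qed

lemma F_inf:
  assumes t: "t > 0" and ne: "{c. F q0 c > t} \<noteq> {}"
  defines "cs \<equiv> Inf {c. F q0 c > t}"
  shows "measure P {x. q0 \<le> top_val (fst x) \<and> top_val (fst x) \<le> cs} \<ge> t"
    and "\<And>c. F q0 c > t \<Longrightarrow> cs < c"
proof -
  have bdd: "bdd_below {c. F q0 c > t}"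
  proof (rule bdd_belowI)
    fix c assume "c \<in> {c. F q0 c > t}"
    then show "q0 \<le> c" using F_low[of c q0] t by (cases "c \<le> q0") auto
  qed
  have up: "F q0 c > t" if "cs < c" for c
  proof -
    obtain a where a: "a \<in> {c. F q0 c > t}" "a < c" using \<open>cs < c\<close> ne unfolding cs_def by (metis cInf_lessD)
    then show ?thesis using F_mono[of a c q0] by auto
  qed
  show "\<And>c. F q0 c > t \<Longrightarrow> cs < c"
  proof -
    fix c assume "F q0 c > t"
    then obtain c' where "c' < c" "F q0 c' > t" using F_left by blast
    then have "cs \<le> c'" unfolding cs_def using bdd by (intro cInf_lower) auto
    then show "cs < c" using \<open>c' < c\<close> by simp
  qed
  define D where "D n = {x :: (real^'n) \<times> real. q0 \<le> top_val (fst x) \<and> top_val (fst x) < cs + 1 / Suc n}" for n :: nat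
  have "range D \<subseteq> sets P" unfolding D_def using sets_R by auto
  moreover have "decseq D"
  proof (rule decseq_SucI)
    fix n :: nat
    have "1 / real (Suc (Suc n)) \<le> 1 / real (Suc n)" by (intro divide_left_mono) auto
    then show "D (Suc n) \<subseteq> D n" unfolding D_def by auto
  qed
  moreover have "\<And>i. emeasure P (D i) \<noteq> \<infinity>" by simp
  ultimately have lim: "(\<lambda>i. measure P (D i)) \<longlonglongrightarrow> measure P (\<Inter>i. D i)" by (rule Lim_measure_decseq)
  have I: "(\<Inter>i. D i) = {x. q0 \<le> top_val (fst x) \<and> top_val (fst x) \<le> cs}"
  proof (rule set_eqI)
    fix x :: "(real^'n) \<times> real"
    show "x \<in> (\<Inter>i. D i) \<longleftrightarrow> x \<in> {x. q0 \<le> top_val (fst x) \<and> top_val (fst x) \<le> cs}"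
      using lim_le_iff[of "top_val (fst x)" cs] by (auto simp: D_def)
  qed
  have ge: "t \<le> measure P (D n)" for n
  proof -
    have "t < F q0 (cs + 1 / Suc n)" by (rule up) simp
    then show ?thesis unfolding F_def D_def by simp
  qed
  show "measure P {x. q0 \<le> top_val (fst x) \<and> top_val (fst x) \<le> cs} \<ge> t"
    using lim unfolding I by (rule LIMSEQ_le_const) (use ge in auto)
qed

end


context setting
begin

lemma prob_event:
  assumes T0: "T0 \<ge> 1" and K: "K \<ge> 1" and \<delta>: "0 < \<delta>" "\<delta> < 1"
  defines "t \<equiv> 1 / real K + sqrt (ln (2 / \<delta>) / (2 * real T0))"
  shows "\<exists>E \<in> sets (PiM {..<T0} (\<lambda>_. P)). measure (PiM {..<T0} (\<lambda>_. P)) E \<ge> 1 - \<delta> \<and>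
     (\<forall>\<omega>\<in>E. \<forall>c. F q0 c > t \<longrightarrow>
        real (card {i\<in>{..<T0}. q0 \<le> top_val (fst (\<omega> i)) \<and> top_val (fst (\<omega> i)) < c}) > real T0 / real K)"
proof -
  define M where "M = PiM {..<T0} (\<lambda>_. P)"
  define I where "I = {..<(T0::nat)}"
  interpret Mp: prob_space M unfolding M_def by (intro prob_space_PiM prob)
  define eps where "eps = sqrt (ln (2 / \<delta>) / (2 * real T0))"
  have lnpos: "ln (2 / \<delta>) > 0" using \<delta> by (simp add: field_simps)
  have eps0: "eps \<ge> 0" unfolding eps_def using lnpos T0 by simp
  have t0: "t > 0" unfolding t_def eps_def[symmetric] using eps0 K by (simp add: add_pos_nonneg)
  show ?thesis
  proof (cases "{c. F q0 c > t} = {}")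
    case True
    show ?thesis
      by (rule bexI[of _ "space M"]) (use True \<delta> in \<open>auto simp: M_def Mp.prob_space[unfolded M_def]\<close>)
  next
    case False
    define cs where "cs = Inf {c. F q0 c > t}"
    define S where "S = {x :: (real^'n) \<times> real. q0 \<le> top_val (fst x) \<and> top_val (fst x) \<le> cs}"
    have PS: "measure P S \<ge> t" unfolding S_def cs_def by (rule F_inf(1)[OF t0 False])
    have cs_lt: "\<And>c. F q0 c > t \<Longrightarrow> cs < c" unfolding cs_def by (rule F_inf(2)[OF t0 False])
    have S_sets[measurable]: "S \<in> sets P"
    proof -
      have "{x\<in>space P. q0 \<le> top_val (fst x) \<and> top_val (fst x) \<le> cs} \<in> sets P" by measurable
      then show ?thesis by (simp add: space_P S_def)
    qed
    define X where "X i \<omega> = (indicator S (\<omega> i) :: real)" for i :: nat and \<omega> :: "nat \<Rightarrow> (real^'n) \<times> real"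
    have comp_meas: "(\<lambda>\<omega>. \<omega> i) \<in> measurable M P" if "i \<in> I" for i
      unfolding M_def using that I_def by (intro measurable_component_singleton) auto
    have Ine: "I \<noteq> {}" unfolding I_def using T0 by (auto simp: lessThan_empty_iff)
    have deq: "distr M (PiM I (\<lambda>_. P)) (\<lambda>x. \<lambda>i\<in>I. x i) = PiM I (\<lambda>i. distr M P (\<lambda>\<omega>. \<omega> i))"
    proof -
      have "distr M (PiM I (\<lambda>_. P)) (\<lambda>x. \<lambda>i\<in>I. x i) = distr M M (\<lambda>x. x)"
        by (intro distr_cong) (auto simp: M_def I_def space_PiM)
      also have "\<dots> = M" by simp
      also have "\<dots> = PiM I (\<lambda>i. distr M P (\<lambda>\<omega>. \<omega> i))"
        unfolding M_def I_def
        by (intro PiM_cong refl distr_PiM_component[symmetric] prob) auto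
      finally show ?thesis .
    qed
    have indep0: "Mp.indep_vars (\<lambda>_. P) (\<lambda>i \<omega>. \<omega> i) I"
      using Mp.indep_vars_iff_distr_eq_PiM'[where I=I and M'="\<lambda>_. P" and X="\<lambda>i \<omega>. \<omega> i", OF Ine comp_meas] deq by blast
    have indep: "Mp.indep_vars (\<lambda>_. borel) X I"
      unfolding X_def by (rule Mp.indep_vars_compose2[OF indep0]) simp
    have expX: "Mp.expectation (X i) = measure P S" if "i \<in> I" for i
    proof -
      have "Mp.expectation (X i) = integral\<^sup>L (distr M P (\<lambda>\<omega>. \<omega> i)) (indicator S)"
        unfolding X_def by (rule integral_distr[symmetric]) (auto intro: comp_meas[OF that])
      also have "distr M P (\<lambda>\<omega>. \<omega> i) = P"
        unfolding M_def using that I_def by (intro distr_PiM_component prob) auto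
      finally show ?thesis by (simp add: space_P)
    qed
    interpret H: Hoeffding_ineq M I X "\<lambda>_. 0" "\<lambda>_. 1" "\<Sum>i\<in>I. Mp.expectation (X i)"
    proof unfold_locales
      show "finite I" unfolding I_def by simp
      show "Mp.indep_vars (\<lambda>_. borel) X I" by (rule indep)
      show "\<And>i. i \<in> I \<Longrightarrow> AE x in M. X i x \<in> {0..1}" unfolding X_def by (simp add: indicator_def)
    qed simp
    have mu: "(\<Sum>i\<in>I. Mp.expectation (X i)) = real T0 * measure P S"
      using expX unfolding I_def by simp
    define bad where "bad = {x\<in>space M. (\<Sum>i\<in>I. X i x) \<le> (\<Sum>i\<in>I. Mp.expectation (X i)) - real T0 * eps}"
    have sq: "(\<Sum>i\<in>I. ((\<lambda>_. 1::real) i - (\<lambda>_. 0) i)\<^sup>2) = real T0" unfolding I_def by simp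
    have "Mp.prob bad \<le> exp (-2 * (real T0 * eps)\<^sup>2 / (\<Sum>i\<in>I. ((\<lambda>_. 1::real) i - (\<lambda>_. 0) i)\<^sup>2))"
      unfolding bad_def by (rule H.Hoeffding_ineq_le) (use eps0 sq T0 in auto)
    also have "\<dots> = exp (- ln (2 / \<delta>))"
    proof -
      have "eps\<^sup>2 = ln (2 / \<delta>) / (2 * real T0)" unfolding eps_def using lnpos T0 by simp
      then have "-2 * (real T0 * eps)\<^sup>2 / real T0 = - ln (2 / \<delta>)"
        using T0 by (simp add: power_mult_distrib field_simps power2_eq_square)
      then show ?thesis using sq by (simp add: I_def)
    qed
    also have "\<dots> = \<delta> / 2" using \<delta> by (subst exp_minus, subst exp_ln) auto
    finally have pbad: "Mp.prob bad \<le> \<delta> / 2" .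
    have bad_sets: "bad \<in> Mp.events" unfolding bad_def X_def M_def I_def by measurable
    define E where "E = space M - bad"
    show ?thesis
    proof (rule bexI[of _ E], intro conjI ballI allI impI)
      show "E \<in> sets (PiM {..<T0} (\<lambda>_. P))" unfolding E_def M_def[symmetric] using bad_sets by auto
      have "Mp.prob E = 1 - Mp.prob bad" unfolding E_def by (rule Mp.prob_compl[OF bad_sets])
      then show "1 - \<delta> \<le> measure (PiM {..<T0} (\<lambda>_. P)) E" using pbad \<delta> unfolding M_def by simp
    next
      fix \<omega> c assume \<omega>: "\<omega> \<in> E" and c: "F q0 c > t"
      have sumX: "(\<Sum>i\<in>I. X i \<omega>) = real (card {i\<in>I. \<omega> i \<in> S})"
      proof -
        have "(\<Sum>i\<in>I. X i \<omega>) = (\<Sum>i\<in>I. indicator {i. \<omega> i \<in> S} i)"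
          unfolding X_def by (intro sum.cong) (auto simp: indicator_def)
        also have "\<dots> = real (card (I \<inter> {i. \<omega> i \<in> S}))" unfolding I_def by (simp add: indicator_def sum.If_cases)
        finally show ?thesis by (simp add: Int_def)
      qed
      have "real T0 * t - real T0 * eps \<le> (\<Sum>i\<in>I. Mp.expectation (X i)) - real T0 * eps"
        using mu PS by (simp add: mult_left_mono)
      also have "\<dots> < (\<Sum>i\<in>I. X i \<omega>)" using \<omega> unfolding E_def bad_def by auto
      finally have "real T0 / real K < real (card {i\<in>I. \<omega> i \<in> S})"
        unfolding sumX t_def eps_def[symmetric] using K by (simp add: field_simps)
      also have "card {i\<in>I. \<omega> i \<in> S} \<le> card {i\<in>{..<T0}. q0 \<le> top_val (fst (\<omega> i)) \<and> top_val (fst (\<omega> i)) < c}"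
        using cs_lt[OF c] unfolding I_def S_def by (intro card_mono) auto
      finally show "real T0 / real K < real (card {i\<in>{..<T0}. q0 \<le> top_val (fst (\<omega> i)) \<and> top_val (fst (\<omega> i)) < c})"
        by simp
    qed
  qed
qed

end


lemma real_le_div_iff: "0 < K \<Longrightarrow> real n \<le> real T0 / real K \<longleftrightarrow> n \<le> T0 div K"
proof -
  assume K: "0 < K"
  have "real n \<le> real T0 / real K \<longleftrightarrow> real n * real K \<le> real T0"
    using K by (simp add: pos_le_divide_eq)
  also have "\<dots> \<longleftrightarrow> n * K \<le> T0" by (metis of_nat_le_iff of_nat_mult)
  also have "\<dots> \<longleftrightarrow> n \<le> T0 div K" using K by (simp add: less_eq_div_iff_mult_less_eq)
  finally show ?thesis .
qed

context
  fixes B :: "real multiset" and T0 K :: nat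
  assumes Bne: "B \<noteq> {#}" and K: "K \<ge> 1"
begin

definition cnt :: "real \<Rightarrow> real \<Rightarrow> nat" where
  "cnt p q = size (filter_mset (\<lambda>b. p < b \<and> b < q) B)"

definition cnt' :: "real \<Rightarrow> real \<Rightarrow> nat" where
  "cnt' p q = size (filter_mset (\<lambda>b. p < b \<and> b \<le> q) B)"

lemma C_facts:
  fixes p :: real
  defines "C \<equiv> {q \<in> set_mset B. real (size (filter_mset (\<lambda>b. p < b \<and> b < q) B)) \<le> real T0 / real K}"
  shows "finite C" "C \<noteq> {}" "grid_step B T0 K p = Max C"
proof -
  show "finite C" unfolding C_def by auto
  define q where "q = Min (set_mset B)"
  have q: "q \<in> set_mset B" unfolding q_def using Bne by (intro Min_in) auto
  have "\<forall>x. x \<in># B \<longrightarrow> q \<le> x" unfolding q_def by auto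
  then have e: "filter_mset (\<lambda>b. p < b \<and> b < q) B = {#}"
    by (auto simp: filter_mset_eq_mempty_iff)
  have "real (size (filter_mset (\<lambda>b. p < b \<and> b < q) B)) \<le> real T0 / real K" by (subst e) simp
  then have "q \<in> C" unfolding C_def using q by blast
  then show "C \<noteq> {}" by auto
  then show "grid_step B T0 K p = Max C" unfolding grid_step_def Let_def C_def[symmetric] by simp
qed

lemma step_in: "grid_step B T0 K p \<in> set_mset B \<and> real (cnt p (grid_step B T0 K p)) \<le> real T0 / real K"
proof -
  note C = C_facts[of p]
  have "Max {q \<in> set_mset B. real (size (filter_mset (\<lambda>b. p < b \<and> b < q) B)) \<le> real T0 / real K}
     \<in> {q \<in> set_mset B. real (size (filter_mset (\<lambda>b. p < b \<and> b < q) B)) \<le> real T0 / real K}"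
    using C by (intro Max_in) auto
  then show ?thesis using C(3) unfolding cnt_def by simp
qed

lemma step_max: "q \<in> set_mset B \<Longrightarrow> real (cnt p q) \<le> real T0 / real K \<Longrightarrow> q \<le> grid_step B T0 K p"
  using C_facts[of p] unfolding cnt_def by (auto intro!: Max_ge)

lemma step_ge_Max:
  assumes "Max (set_mset B) \<le> p"
  shows "Max (set_mset B) \<le> grid_step B T0 K p"
proof (rule step_max)
  show "Max (set_mset B) \<in> set_mset B" using Bne by (intro Max_in) auto
  have e: "filter_mset (\<lambda>b. p < b \<and> b < Max (set_mset B)) B = {#}"
    using assms by (auto simp: filter_mset_eq_mempty_iff)
  show "real (cnt p (Max (set_mset B))) \<le> real T0 / real K" unfolding cnt_def by (subst e) simp
qed

lemma cnt'_split:
  assumes "a \<le> b" "b \<le> c"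
  shows "cnt' a c = cnt' a b + cnt' b c"
proof -
  have "filter_mset (\<lambda>x. a < x \<and> x \<le> c) B = filter_mset (\<lambda>x. a < x \<and> x \<le> b) B + filter_mset (\<lambda>x. b < x \<and> x \<le> c) B"
    using assms by (induction B) auto
  then show ?thesis unfolding cnt'_def by simp
qed

lemma step_progress:
  assumes T0: "size B = T0"
    and lt: "grid_step B T0 K p < Max (set_mset B)"
  shows "p < grid_step B T0 K p \<and> cnt' p (grid_step B T0 K p) \<ge> T0 div K + 1"
proof -
  let ?p' = "grid_step B T0 K p"
  define S where "S = {x \<in> set_mset B. ?p' < x}"
  have Sfin: "finite S" and Sne: "S \<noteq> {}"
  proof -
    show "finite S" unfolding S_def by auto
    have "Max (set_mset B) \<in> set_mset B" using Bne by (intro Max_in) auto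
    then show "S \<noteq> {}" unfolding S_def using lt by auto
  qed
  define q where "q = Min S"
  have qS: "q \<in> S" unfolding q_def using Sfin Sne by (rule Min_in)
  have qmin: "\<And>x. x \<in> set_mset B \<Longrightarrow> ?p' < x \<Longrightarrow> q \<le> x"
    unfolding q_def S_def by (intro Min_le) auto
  have "\<not> real (cnt p q) \<le> real T0 / real K"
  proof
    assume "real (cnt p q) \<le> real T0 / real K"
    then have "q \<le> ?p'" using qS by (intro step_max) (auto simp: S_def)
    then show False using qS by (auto simp: S_def)
  qed
  then have c1: "cnt p q \<ge> T0 div K + 1" using K by (simp add: real_le_div_iff)
  have eq: "filter_mset (\<lambda>b. p < b \<and> b < q) B = filter_mset (\<lambda>b. p < b \<and> b \<le> ?p') B"
  proof (rule filter_mset_cong[OF refl])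
    fix x assume "x \<in># B"
    show "(p < x \<and> x < q) = (p < x \<and> x \<le> ?p')"
    proof
      assume h: "p < x \<and> x < q"
      show "p < x \<and> x \<le> ?p'"
      proof (rule ccontr)
        assume "\<not> (p < x \<and> x \<le> ?p')"
        then have "?p' < x" using h by auto
        then have "q \<le> x" using qmin \<open>x \<in># B\<close> by auto
        then show False using h by auto
      qed
    next
      assume "p < x \<and> x \<le> ?p'"
      then show "p < x \<and> x < q" using qS by (auto simp: S_def)
    qed
  qed
  then have c2: "cnt' p ?p' \<ge> T0 div K + 1" using c1 unfolding cnt_def cnt'_def by simp
  have "filter_mset (\<lambda>b. p < b \<and> b \<le> ?p') B \<noteq> {#}"
  proof
    assume e2: "filter_mset (\<lambda>b. p < b \<and> b \<le> ?p') B = {#}"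
    have "cnt' p ?p' = 0" unfolding cnt'_def by (subst e2) simp
    then show False using c2 by simp
  qed
  then obtain x where "x \<in># filter_mset (\<lambda>b. p < b \<and> b \<le> ?p') B" by (meson multiset_nonemptyE)
  then have "p < x \<and> x \<le> ?p'" by simp
  then show ?thesis using c2 by auto
qed

lemma coverage:
  assumes T0: "size B = T0"
  shows "Max (set_mset B) \<le> grid_pt B T0 K K"
proof -
  let ?M = "Max (set_mset B)"
  have S: "?M \<le> grid_pt B T0 K j \<or> (0 \<le> grid_pt B T0 K j \<and> cnt' 0 (grid_pt B T0 K j) \<ge> j * (T0 div K + 1))" for j
  proof (induction j)
    case 0 then show ?case by simp
  next
    case (Suc j)
    let ?p = "grid_pt B T0 K j"
    show ?case
    proof (cases "?M \<le> ?p")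
      case True
      then show ?thesis using step_ge_Max by simp
    next
      case False
      with Suc.IH have IH: "0 \<le> ?p" "cnt' 0 ?p \<ge> j * (T0 div K + 1)" by auto
      show ?thesis
      proof (cases "?M \<le> grid_step B T0 K ?p")
        case True then show ?thesis by simp
      next
        case False
        then have pr: "?p < grid_step B T0 K ?p" "cnt' ?p (grid_step B T0 K ?p) \<ge> T0 div K + 1"
          using step_progress[OF T0] by auto
        have "cnt' 0 (grid_step B T0 K ?p) = cnt' 0 ?p + cnt' ?p (grid_step B T0 K ?p)"
          using IH pr by (intro cnt'_split) auto
        then show ?thesis using IH pr by simp
      qed
    qed
  qed
  show ?thesis
  proof (rule ccontr)
    assume "\<not> ?M \<le> grid_pt B T0 K K"
    then have "cnt' 0 (grid_pt B T0 K K) \<ge> K * (T0 div K + 1)" using S[of K] by auto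
    moreover have "cnt' 0 (grid_pt B T0 K K) \<le> T0" unfolding cnt'_def using T0
      by (metis size_filter_mset_lesseq)
    moreover have "T0 < K * (T0 div K + 1)"
    proof -
      have "T0 = K * (T0 div K) + T0 mod K" by simp
      moreover have "T0 mod K < K" using K by simp
      moreover have "K * (T0 div K + 1) = K * (T0 div K) + K" by (simp add: algebra_simps)
      ultimately show ?thesis by linarith
    qed
    ultimately show False by simp
  qed
qed

end


lemma size_filter_sample:
  "size (filter_mset Q (sample_tops \<omega> T0)) = card {i\<in>{..<T0}. Q (top_val (fst (\<omega> i)))}"
  unfolding sample_tops_def by (simp add: filter_mset_image_mset)

theorem lemma3:
  fixes P :: "((real^'n) \<times> real) measure"
    and T0 K :: nat and \<delta> :: real
  assumes n2: "CARD('n) \<ge> 2"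
    and prob: "prob_space P"
    and sets_P: "sets P = sets borel"
    and supp: "AE x in P. (\<forall>i. fst x $ i \<in> {0..1}) \<and> snd x \<in> {0..1}"
    and attained: "\<exists>q\<in>{0..1}. \<forall>q'\<in>{0..1}. GFT P q' \<le> GFT P q"
    and T0: "T0 \<ge> 1" and K: "K \<ge> 1"
    and \<delta>: "0 < \<delta>" "\<delta> < 1"
  shows "\<exists>E \<in> sets (PiM {..<T0} (\<lambda>_. P)).
           measure (PiM {..<T0} (\<lambda>_. P)) E \<ge> 1 - \<delta> \<and>
           (\<forall>\<omega>\<in>E. (SUP q\<in>{0..1}. GFT P q)
                     - Max (GFT P ` buyer_grid (sample_tops \<omega> T0) T0 K)
                   \<le> 1 / real K + sqrt (ln (2 / \<delta>) / (2 * real T0)))"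
proof -
  interpret S: setting P using n2 prob sets_P supp by (rule setting.intro)
  obtain q0 where q0: "q0 \<in> {0..1}" "\<forall>q'\<in>{0..1}. GFT P q' \<le> GFT P q0" using attained by blast
  have SUP: "(SUP q\<in>{0..1}. GFT P q) = GFT P q0"
    by (rule cSup_eq_maximum) (use q0 in auto)
  define t where "t = 1 / real K + sqrt (ln (2 / \<delta>) / (2 * real T0))"
  have lnpos: "ln (2 / \<delta>) > 0" using \<delta> by (simp add: field_simps)
  have t0: "t \<ge> 0" unfolding t_def using lnpos T0 by simp
  obtain E where E: "E \<in> sets (PiM {..<T0} (\<lambda>_. P))" "measure (PiM {..<T0} (\<lambda>_. P)) E \<ge> 1 - \<delta>"
    "\<forall>\<omega>\<in>E. \<forall>c. S.F q0 c > t \<longrightarrow>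
        real (card {i\<in>{..<T0}. q0 \<le> top_val (fst (\<omega> i)) \<and> top_val (fst (\<omega> i)) < c}) > real T0 / real K"
    using S.prob_event[OF T0 K \<delta>, of q0] unfolding t_def by blast
  show ?thesis
  proof (rule bexI[OF _ E(1)], intro conjI ballI)
    show "measure (PiM {..<T0} (\<lambda>_. P)) E \<ge> 1 - \<delta>" by (rule E(2))
  next
    fix \<omega> assume \<omega>: "\<omega> \<in> E"
    have cnt: "\<And>c. S.F q0 c > t \<Longrightarrow>
        real (card {i\<in>{..<T0}. q0 \<le> top_val (fst (\<omega> i)) \<and> top_val (fst (\<omega> i)) < c}) > real T0 / real K"
      using E(3) \<omega> by blast
    define B where "B = sample_tops \<omega> T0"
    have sizeB: "size B = T0" unfolding B_def sample_tops_def by simp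
    have Bne: "B \<noteq> {#}" using sizeB T0 by auto
    let ?G = "buyer_grid B T0 K"
    have Gsub: "?G \<subseteq> {0} \<union> (\<lambda>k. grid_pt B T0 K k) ` {1..K}" unfolding buyer_grid_def by auto
    have Gfin: "finite ?G" by (rule finite_subset[OF Gsub]) auto
    have G0: "0 \<in> ?G" unfolding buyer_grid_def by simp
    have Gk: "grid_pt B T0 K k \<in> ?G" if "1 \<le> k" "k \<le> K" for k
      unfolding buyer_grid_def using that by blast
    have "\<exists>p\<in>?G. GFT P q0 - GFT P p \<le> t"
    proof (cases "q0 \<le> 0")
      case True
      then have "q0 = 0" using q0 by auto
      then show ?thesis using G0 t0 by (intro bexI[of _ 0]) auto
    next
      case False
      define J where "J = {k. k \<le> K \<and> grid_pt B T0 K k < q0}"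
      have Jfin: "finite J" unfolding J_def by auto
      have J0: "0 \<in> J" unfolding J_def using False by simp
      define k where "k = Max J"
      have kJ: "k \<in> J" unfolding k_def using Jfin J0 by (intro Max_in) auto
      have kmax: "\<And>j. j \<in> J \<Longrightarrow> j \<le> k" unfolding k_def using Jfin by (intro Max_ge)
      have kK: "k \<le> K" and pk: "grid_pt B T0 K k < q0" using kJ unfolding J_def by auto
      show ?thesis
      proof (cases "k < K")
        case True
        define p where "p = grid_pt B T0 K (Suc k)"
        have pG: "p \<in> ?G" unfolding p_def using True by (intro Gk) auto
        have "Suc k \<notin> J" using kmax by fastforce
        then have qp: "q0 \<le> p" unfolding J_def p_def using True by auto
        have "GFT P q0 - GFT P p \<le> S.F q0 p" unfolding S.F_def by (rule S.diff_bound_up[OF qp])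
        also have "S.F q0 p \<le> t"
        proof (rule ccontr)
          assume "\<not> S.F q0 p \<le> t"
          then have c: "real T0 / real K < real (card {i\<in>{..<T0}. q0 \<le> top_val (fst (\<omega> i)) \<and> top_val (fst (\<omega> i)) < p})"
            using cnt by simp
          have st: "real (size (filter_mset (\<lambda>b. grid_pt B T0 K k < b \<and> b < p) B)) \<le> real T0 / real K"
            using step_in[OF Bne K, of T0 "grid_pt B T0 K k"] unfolding p_def by (simp add: cnt_def[OF Bne K])
          have "card {i\<in>{..<T0}. q0 \<le> top_val (fst (\<omega> i)) \<and> top_val (fst (\<omega> i)) < p}
              \<le> card {i\<in>{..<T0}. grid_pt B T0 K k < top_val (fst (\<omega> i)) \<and> top_val (fst (\<omega> i)) < p}"
            using pk by (intro card_mono) auto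
          also have "\<dots> = size (filter_mset (\<lambda>b. grid_pt B T0 K k < b \<and> b < p) B)"
            unfolding B_def by (rule size_filter_sample[symmetric])
          finally show False using c st by linarith
        qed
        finally show ?thesis using pG by blast
      next
        case False
        then have kK': "k = K" using kK by simp
        define p where "p = grid_pt B T0 K K"
        have pG: "p \<in> ?G" unfolding p_def using K by (intro Gk) auto
        have pq: "p \<le> q0" using pk kK' unfolding p_def by simp
        have "GFT P q0 - GFT P p \<le> S.F q0 2" unfolding S.F_def by (rule S.diff_bound_down[OF pq])
        also have "S.F q0 2 \<le> t"
        proof (rule ccontr)
          assume "\<not> S.F q0 2 \<le> t"
          then have c: "real T0 / real K < real (card {i\<in>{..<T0}. q0 \<le> top_val (fst (\<omega> i)) \<and> top_val (fst (\<omega> i)) < 2})"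
            using cnt by simp
          have "0 \<le> real T0 / real K" by simp
          then have "{i\<in>{..<T0}. q0 \<le> top_val (fst (\<omega> i)) \<and> top_val (fst (\<omega> i)) < 2} \<noteq> {}"
            using c by (metis card.empty of_nat_0 order_less_le_trans not_less)
          then obtain i where i: "i < T0" "q0 \<le> top_val (fst (\<omega> i))" by auto
          have "top_val (fst (\<omega> i)) \<in> set_mset B" unfolding B_def sample_tops_def using i by auto
          then have "top_val (fst (\<omega> i)) \<le> Max (set_mset B)" by (intro Max_ge) auto
          also have "\<dots> \<le> p" unfolding p_def by (rule coverage[OF Bne K sizeB])
          finally show False using i pk kK' unfolding p_def by simp
        qed
        finally show ?thesis using pG by blast
      qed
    qed
    then obtain p where pG: "p \<in> ?G" and pb: "GFT P q0 - GFT P p \<le> t" by blast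
    have "GFT P p \<le> Max (GFT P ` ?G)" using Gfin pG by (intro Max_ge) auto
    then show "(SUP q\<in>{0..1}. GFT P q) - Max (GFT P ` buyer_grid (sample_tops \<omega> T0) T0 K)
                   \<le> 1 / real K + sqrt (ln (2 / \<delta>) / (2 * real T0))"
      using pb unfolding SUP B_def[symmetric] t_def[symmetric] by linarith
  qed
qed


end
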